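(* Let $(\xi_n)_{n\in\mathbb{Z}}$ be a stationary Markov chain with invariant distribution $\pi$, let $f\in\mathbb{L}_0^2(\pi)$, $X_i=f(\xi_i)$, $S_n=\sum_{i=1}^nX_i$ (with $S_0=0$). Then each of the sequences $(\|E(S_n\mid\xi_0)\|)_{n\ge0}$, $(\|E(S_n\mid\xi_n)\|)_{n\ge0}$ and $(\|E(S_n\mid\xi_0,\xi_n)\|)_{n\ge0}$ is subadditive, i.e. a sequence $(b_n)$ of the form listed satisfies $b_{n+m}\le b_n+b_m$ for all $n,m$.
   Context: The chain is defined on a probability space $(\Omega,\mathcal{F},\mathbb{P})$ with values in a measurable space $(S,\mathcal{A})$ and $\pi(A)=\mathbb{P}(\xi_0\in A)$. $\mathbb{L}_0^2(\pi)$ is the set of measurable $f$ with $\int f^2d\pi<\infty$ and $\int f d\pi=0$. $\|\cdot\|$ is the norm in $\mathbb{L}^2(\mathbb{P})$. *)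

theory Defs
  imports "HOL-Probability.Probability"
begin

definition gen_sigma :: "'a measure \<Rightarrow> 's measure \<Rightarrow> (int \<Rightarrow> 'a \<Rightarrow> 's) \<Rightarrow> int set \<Rightarrow> 'a measure" where
  "gen_sigma M S xi K =
     sigma (space M) (\<Union>k\<in>K. {xi k -` A \<inter> space M | A. A \<in> sets S})"

definition stationary_process :: "'a measure \<Rightarrow> 's measure \<Rightarrow> (int \<Rightarrow> 'a \<Rightarrow> 's) \<Rightarrow> bool" where
  "stationary_process M S xi \<longleftrightarrow>
     (\<forall>I k. finite I \<longrightarrow>
        distr M (Pi\<^sub>M I (\<lambda>_. S)) (\<lambda>\<omega>. \<lambda>i\<in>I. xi (i + k) \<omega>) =
        distr M (Pi\<^sub>M I (\<lambda>_. S)) (\<lambda>\<omega>. \<lambda>i\<in>I. xi i \<omega>))"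

definition markov_process :: "'a measure \<Rightarrow> 's measure \<Rightarrow> (int \<Rightarrow> 'a \<Rightarrow> 's) \<Rightarrow> bool" where
  "markov_process M S xi \<longleftrightarrow>
     (\<forall>n. \<forall>A\<in>sets S.
        AE \<omega> in M. real_cond_exp M (gen_sigma M S xi {..n}) (indicator (xi (n + 1) -` A \<inter> space M)) \<omega>
                 = real_cond_exp M (gen_sigma M S xi {n}) (indicator (xi (n + 1) -` A \<inter> space M)) \<omega>)"

definition stationary_markov_chain :: "'a measure \<Rightarrow> 's measure \<Rightarrow> (int \<Rightarrow> 'a \<Rightarrow> 's) \<Rightarrow> bool" where
  "stationary_markov_chain M S xi \<longleftrightarrow>
     prob_space M \<and> (\<forall>i. xi i \<in> measurable M S) \<and>
     stationary_process M S xi \<and> markov_process M S xi"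

definition L2_0 :: "'s measure \<Rightarrow> ('s \<Rightarrow> real) set" where
  "L2_0 \<pi> = {f. f \<in> borel_measurable \<pi> \<and> integrable \<pi> (\<lambda>x. (f x)\<^sup>2) \<and> integrable \<pi> f \<and> (\<integral>x. f x \<partial>\<pi>) = 0}"

definition L2norm :: "'a measure \<Rightarrow> ('a \<Rightarrow> real) \<Rightarrow> real" where
  "L2norm M Y = sqrt (\<integral>\<omega>. (Y \<omega>)\<^sup>2 \<partial>M)"

end

theory Submission
  imports Defs
begin

lemma sqrt_sum_bound:
  fixes x a b :: real
  assumes a: "a \<ge> 0" and b: "b \<ge> 0"
    and H: "\<And>t. t > 0 \<Longrightarrow> x \<le> (1 + t) * a + (1 + 1 / t) * b"
  shows "sqrt x \<le> sqrt a + sqrt b"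
proof -
  have "x \<le> (sqrt a + sqrt b)\<^sup>2"
  proof (cases "a > 0 \<and> b > 0")
    case True
    define t where "t = sqrt b / sqrt a"
    have tp: "t > 0" using True by (simp add: t_def)
    have "(1 + t) * a = a + sqrt a * sqrt b"
      using True by (simp add: t_def field_simps)
    moreover have "(1 + 1 / t) * b = b + sqrt a * sqrt b"
      using True by (simp add: t_def field_simps)
    ultimately have "x \<le> a + b + 2 * sqrt a * sqrt b" using H[OF tp] by simp
    also have "\<dots> = (sqrt a + sqrt b)\<^sup>2" using a b by (simp add: power2_eq_square algebra_simps)
    finally show ?thesis .
  next
    case False
    then have "a = 0 \<or> b = 0" using a b by auto
    then show ?thesis
    proof
      assume a0: "a = 0"
      show ?thesis
      proof (rule ccontr)
        assume "\<not> ?thesis"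
        then have xb: "x > b" using a0 b by simp
        show False
        proof (cases "b = 0")
          case True
          then show False using H[of 1] a0 xb by simp
        next
          case False
          define t where "t = 2 * b / (x - b)"
          have tp: "t > 0" using False b xb by (simp add: t_def)
          have "(1 + 1 / t) * b = b + (x - b) / 2" using False xb by (simp add: t_def field_simps)
          then show False using H[OF tp] a0 xb by (simp add: field_simps)
        qed
      qed
    next
      assume b0: "b = 0"
      show ?thesis
      proof (rule ccontr)
        assume "\<not> ?thesis"
        then have xa: "x > a" using b0 a by simp
        show False
        proof (cases "a = 0")
          case True
          then show False using H[of 1] b0 xa by simp
        next
          case False
          define t where "t = (x - a) / (2 * a)"
          have tp: "t > 0" using False a xa by (simp add: t_def)
          have "(1 + t) * a = a + (x - a) / 2" using False xa by (simp add: t_def field_simps)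
          then show False using H[OF tp] b0 xa by (simp add: field_simps)
        qed
      qed
    qed
  qed
  then have "sqrt x \<le> sqrt ((sqrt a + sqrt b)\<^sup>2)" by (rule real_sqrt_le_mono)
  also have "\<dots> = sqrt a + sqrt b" using a b by simp
  finally show ?thesis .
qed

lemma L2norm_triangle:
  fixes X Y :: "'a \<Rightarrow> real"
  assumes [measurable]: "X \<in> borel_measurable M" "Y \<in> borel_measurable M"
    and iX: "integrable M (\<lambda>x. (X x)\<^sup>2)" and iY: "integrable M (\<lambda>x. (Y x)\<^sup>2)"
  shows "L2norm M (\<lambda>x. X x + Y x) \<le> L2norm M X + L2norm M Y"
  unfolding L2norm_def
proof (rule sqrt_sum_bound)
  show "0 \<le> (\<integral>x. (X x)\<^sup>2 \<partial>M)" "0 \<le> (\<integral>x. (Y x)\<^sup>2 \<partial>M)" by auto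
  fix t :: real assume t: "t > 0"
  have pw: "(X x + Y x)\<^sup>2 \<le> (1 + t) * (X x)\<^sup>2 + (1 + 1 / t) * (Y x)\<^sup>2" for x
  proof -
    have "0 \<le> (t * X x - Y x)\<^sup>2" by simp
    then have "2 * t * (X x * Y x) \<le> t * (t * (X x)\<^sup>2) + (Y x)\<^sup>2"
      by (simp add: power2_eq_square algebra_simps)
    then have "2 * (X x * Y x) \<le> t * (X x)\<^sup>2 + (Y x)\<^sup>2 / t"
      using t by (simp add: field_simps)
    then show ?thesis using t by (simp add: power2_eq_square field_simps)
  qed
  have i2: "integrable M (\<lambda>x. (1 + t) * (X x)\<^sup>2 + (1 + 1 / t) * (Y x)\<^sup>2)"
    using iX iY by auto
  have i1: "integrable M (\<lambda>x. (X x + Y x)\<^sup>2)"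
    by (rule Bochner_Integration.integrable_bound[OF i2]) (auto intro!: AE_I2 order_trans[OF pw abs_ge_self])
  have "(\<integral>x. (X x + Y x)\<^sup>2 \<partial>M) \<le> (\<integral>x. (1 + t) * (X x)\<^sup>2 + (1 + 1 / t) * (Y x)\<^sup>2 \<partial>M)"
    by (rule integral_mono[OF i1 i2 pw])
  also have "\<dots> = (1 + t) * (\<integral>x. (X x)\<^sup>2 \<partial>M) + (1 + 1 / t) * (\<integral>x. (Y x)\<^sup>2 \<partial>M)"
    using iX iY by simp
  finally show "(\<integral>x. (X x + Y x)\<^sup>2 \<partial>M) \<le> (1 + t) * (\<integral>x. (X x)\<^sup>2 \<partial>M) + (1 + 1 / t) * (\<integral>x. (Y x)\<^sup>2 \<partial>M)" .
qed

lemma L2norm_cong_AE: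
  assumes "AE x in M. X x = Y x" "X \<in> borel_measurable M" "Y \<in> borel_measurable M"
  shows "L2norm M X = L2norm M Y"
  unfolding L2norm_def using assms by (auto intro!: integral_cong_AE arg_cong[where f=sqrt])

lemma sfs:
  assumes "prob_space M" "subalgebra M F"
  shows "sigma_finite_subalgebra M F"
proof -
  interpret prob_space M by fact
  have "finite_measure_subalgebra M F"
    by (rule finite_measure_subalgebra.intro) (auto simp: finite_measure_subalgebra_axioms_def assms finite_measure_axioms)
  then show ?thesis by (rule finite_measure_subalgebra_is_sigma_finite)
qed

lemma ce_sq:
  fixes X :: "'a \<Rightarrow> real"
  assumes P: "prob_space M" and sub: "subalgebra M F"
    and [measurable]: "X \<in> borel_measurable M" and iX: "integrable M (\<lambda>x. (X x)\<^sup>2)"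
  shows "integrable M (\<lambda>x. (real_cond_exp M F X x)\<^sup>2)"
    "(\<integral>x. (real_cond_exp M F X x)\<^sup>2 \<partial>M) \<le> (\<integral>x. (X x)\<^sup>2 \<partial>M)"
proof -
  interpret prob_space M by fact
  interpret sigma_finite_subalgebra M F using sfs[OF P sub] .
  have iX1: "integrable M X" by (rule square_integrable_imp_integrable) (auto simp: iX)
  have cv: "convex_on UNIV (\<lambda>x::real. x\<^sup>2)" using convex_power2 by simp
  show i: "integrable M (\<lambda>x. (real_cond_exp M F X x)\<^sup>2)"
    by (rule integrable_convex_cond_exp[of X UNIV, OF iX1 _ _ _ cv]) (auto simp: iX)
  have j: "AE x in M. (real_cond_exp M F X x)\<^sup>2 \<le> real_cond_exp M F (\<lambda>x. (X x)\<^sup>2) x"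
    by (rule real_cond_exp_jensens_inequality(2)[of X UNIV, OF iX1 _ _ _ cv]) (auto simp: iX)
  have "(\<integral>x. (real_cond_exp M F X x)\<^sup>2 \<partial>M) \<le> (\<integral>x. real_cond_exp M F (\<lambda>x. (X x)\<^sup>2) x \<partial>M)"
    by (rule integral_mono_AE[OF i real_cond_exp_int(1)[OF iX] j])
  also have "\<dots> = (\<integral>x. (X x)\<^sup>2 \<partial>M)" by (rule real_cond_exp_int(2)[OF iX])
  finally show "(\<integral>x. (real_cond_exp M F X x)\<^sup>2 \<partial>M) \<le> (\<integral>x. (X x)\<^sup>2 \<partial>M)" .
qed

lemma L2norm_ce_le:
  assumes "prob_space M" "subalgebra M F" "X \<in> borel_measurable M" "integrable M (\<lambda>x. (X x)\<^sup>2)"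
  shows "L2norm M (real_cond_exp M F X) \<le> L2norm M X"
  unfolding L2norm_def using ce_sq(2)[OF assms] by simp

lemma integrable_bdd_mult:
  fixes X Z :: "'a \<Rightarrow> real"
  assumes "integrable M X" "Z \<in> borel_measurable M" "AE x in M. \<bar>Z x\<bar> \<le> c"
  shows "integrable M (\<lambda>x. Z x * X x)"
proof (rule Bochner_Integration.integrable_bound[of M "\<lambda>x. c * X x"])
  show "integrable M (\<lambda>x. c * X x)" using assms by auto
  show "(\<lambda>x. Z x * X x) \<in> borel_measurable M" using assms by (auto intro: borel_measurable_integrable)
  show "AE x in M. norm (Z x * X x) \<le> norm (c * X x)"
    using assms(3) by eventually_elim (auto simp: abs_mult intro!: mult_right_mono)
qed

lemma ce_ind_bdd:
  assumes P: "prob_space M" and sub: "subalgebra M F" and a: "a \<in> sets M"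
  shows "AE x in M. \<bar>real_cond_exp M F (indicator a) x\<bar> \<le> 1"
proof -
  interpret prob_space M by fact
  interpret sigma_finite_subalgebra M F using sfs[OF P sub] .
  have ia: "integrable M (indicator a :: 'a \<Rightarrow> real)" using a by (simp add: emeasure_eq_measure)
  have "AE x in M. real_cond_exp M F (indicator a) x \<ge> 0"
    by (rule real_cond_exp_pos) (auto simp: a borel_measurable_indicator)
  moreover have "AE x in M. real_cond_exp M F (indicator a) x \<le> 1"
    by (rule real_cond_exp_le_c[OF ia]) (auto simp: indicator_def)
  ultimately show ?thesis by eventually_elim auto
qed


locale smc =
  fixes M :: "'a measure" and S :: "'s measure" and xi :: "int \<Rightarrow> 'a \<Rightarrow> 's"
  assumes smc: "stationary_markov_chain M S xi"
begin

lemma P: "prob_space M" using smc by (simp add: stationary_markov_chain_def)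
lemma xi_meas [measurable]: "xi i \<in> measurable M S" using smc by (simp add: stationary_markov_chain_def)
lemma stat: "stationary_process M S xi" using smc by (simp add: stationary_markov_chain_def)
lemma markov: "markov_process M S xi" using smc by (simp add: stationary_markov_chain_def)

abbreviation G where "G K \<equiv> gen_sigma M S xi K"

definition gens where "gens K = (\<Union>k\<in>K. {xi k -` A \<inter> space M | A. A \<in> sets S})"

lemma gens_Pow: "gens K \<subseteq> Pow (space M)" unfolding gens_def by auto

lemma gens_sets: "gens K \<subseteq> sets M"
  unfolding gens_def using measurable_sets[OF xi_meas] by blast

lemma space_G [simp]: "space (G K) = space M"
  unfolding gen_sigma_def by (simp add: space_measure_of_conv)

lemma sets_G: "sets (G K) = sigma_sets (space M) (gens K)"
  unfolding gen_sigma_def gens_def[symmetric] by (rule sets_measure_of[OF gens_Pow])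

lemma sets_G_sub: "sets (G K) \<subseteq> sets M"
  unfolding sets_G by (rule sets.sigma_sets_subset[OF gens_sets])

lemma subalg_G: "subalgebra M (G K)"
  unfolding subalgebra_def using sets_G_sub by simp

lemma sfs_G: "sigma_finite_subalgebra M (G K)"
  by (rule sfs[OF P subalg_G])

lemma G_mono: "K \<subseteq> L \<Longrightarrow> sets (G K) \<subseteq> sets (G L)"
  unfolding sets_G by (rule sigma_sets_mono') (auto simp: gens_def)

lemma subalg_G_G: "K \<subseteq> L \<Longrightarrow> subalgebra (G L) (G K)"
  unfolding subalgebra_def using G_mono by simp

lemma gens_in_G: "k \<in> K \<Longrightarrow> A \<in> sets S \<Longrightarrow> xi k -` A \<inter> space M \<in> sets (G K)"
  unfolding sets_G gens_def by (rule sigma_sets.Basic) blast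

lemma xi_meas_G: "k \<in> K \<Longrightarrow> xi k \<in> measurable (G K) S"
  by (rule measurableI) (auto simp: gens_in_G measurable_space[OF xi_meas])

lemma sets_G_single: "sets (G {k}) = {xi k -` A \<inter> space M | A. A \<in> sets S}"
proof -
  have "{xi k -` A \<inter> space M | A. A \<in> sigma_sets (space S) (sets S)}
      = sigma_sets (space M) {xi k -` A \<inter> space M | A. A \<in> sets S}"
    by (rule sigma_sets_vimage_commute) (use measurable_space[OF xi_meas] in auto)
  moreover have "gens {k} = {xi k -` A \<inter> space M | A. A \<in> sets S}" by (simp add: gens_def)
  ultimately show ?thesis by (simp add: sets_G sets.sigma_sets_eq)
qed

definition prs where "prs K1 K2 = {a \<inter> h | a h. a \<in> sets (G K1) \<and> h \<in> sets (G K2)}"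

lemma prs_Pow: "prs K1 K2 \<subseteq> Pow (space M)"
  unfolding prs_def using sets.sets_into_space[of _ "G K1"] by auto

lemma prs_Int_stable: "Int_stable (prs K1 K2)"
  unfolding prs_def Int_stable_def
proof clarify
  fix a h a' h' assume "a \<in> sets (G K1)" "h \<in> sets (G K2)" "a' \<in> sets (G K1)" "h' \<in> sets (G K2)"
  then show "\<exists>a'' h''. a \<inter> h \<inter> (a' \<inter> h') = a'' \<inter> h'' \<and> a'' \<in> sets (G K1) \<and> h'' \<in> sets (G K2)"
    by (intro exI[of _ "a \<inter> a'"] exI[of _ "h \<inter> h'"]) auto
qed

lemma space_in_prs: "space M \<in> prs K1 K2"
  unfolding prs_def by (auto intro!: exI[of _ "space M"] simp: sets.top[of "G K1", simplified] sets.top[of "G K2", simplified])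

lemma sets_G_Un: "sets (G (K1 \<union> K2)) = sigma_sets (space M) (prs K1 K2)"
proof
  have "prs K1 K2 \<subseteq> sets (G (K1 \<union> K2))"
    unfolding prs_def using G_mono[of K1 "K1 \<union> K2"] G_mono[of K2 "K1 \<union> K2"] by blast
  then show "sigma_sets (space M) (prs K1 K2) \<subseteq> sets (G (K1 \<union> K2))"
    using sets.sigma_sets_subset[of "prs K1 K2" "G (K1 \<union> K2)"] by simp
next
  have "gens (K1 \<union> K2) \<subseteq> prs K1 K2"
  proof
    fix x assume "x \<in> gens (K1 \<union> K2)"
    then obtain k A where kA: "k \<in> K1 \<union> K2" "A \<in> sets S" "x = xi k -` A \<inter> space M"
      unfolding gens_def by auto
    show "x \<in> prs K1 K2"
    proof (cases "k \<in> K1")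
      case True
      then show ?thesis unfolding prs_def using kA gens_in_G[of k K1 A] sets.top[of "G K2"]
        by (intro CollectI exI[of _ x] exI[of _ "space M"]) auto
    next
      case False
      then have "k \<in> K2" using kA by auto
      then show ?thesis unfolding prs_def using kA gens_in_G[of k K2 A] sets.top[of "G K1"]
        by (intro CollectI exI[of _ x] exI[of _ "space M"]) auto
    qed
  qed
  then show "sets (G (K1 \<union> K2)) \<subseteq> sigma_sets (space M) (prs K1 K2)"
    unfolding sets_G by (rule sigma_sets_mono') 
qed

lemma distr_xi: "distr M S (xi i) = distr M S (xi 0)"
proof -
  have st: "distr M (Pi\<^sub>M {0} (\<lambda>_. S)) (\<lambda>\<omega>. \<lambda>j\<in>{0}. xi (j + i) \<omega>) =
        distr M (Pi\<^sub>M {0} (\<lambda>_. S)) (\<lambda>\<omega>. \<lambda>j\<in>{0}. xi j \<omega>)"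
    using stat unfolding stationary_process_def by auto
  have m1: "(\<lambda>\<omega>. \<lambda>j\<in>{0::int}. xi (j + i) \<omega>) \<in> measurable M (Pi\<^sub>M {0} (\<lambda>_. S))" by measurable
  have m2: "(\<lambda>\<omega>. \<lambda>j\<in>{0::int}. xi j \<omega>) \<in> measurable M (Pi\<^sub>M {0} (\<lambda>_. S))" by measurable
  have mp: "(\<lambda>x. x 0) \<in> measurable (Pi\<^sub>M {0::int} (\<lambda>_. S)) S" by measurable
  have "distr M S (xi i) = distr M S ((\<lambda>x. x 0) \<circ> (\<lambda>\<omega>. \<lambda>j\<in>{0::int}. xi (j + i) \<omega>))"
    by (simp add: o_def)
  also have "\<dots> = distr (distr M (Pi\<^sub>M {0} (\<lambda>_. S)) (\<lambda>\<omega>. \<lambda>j\<in>{0}. xi (j + i) \<omega>)) S (\<lambda>x. x 0)"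
    by (rule distr_distr[OF mp m1, symmetric])
  also have "\<dots> = distr (distr M (Pi\<^sub>M {0} (\<lambda>_. S)) (\<lambda>\<omega>. \<lambda>j\<in>{0}. xi j \<omega>)) S (\<lambda>x. x 0)"
    by (simp add: st)
  also have "\<dots> = distr M S ((\<lambda>x. x 0) \<circ> (\<lambda>\<omega>. \<lambda>j\<in>{0::int}. xi j \<omega>))"
    by (rule distr_distr[OF mp m2])
  also have "\<dots> = distr M S (xi 0)" by (simp add: o_def)
  finally show ?thesis .
qed

end


lemma set_int_dynkin:
  fixes h1 h2 :: "'a \<Rightarrow> real"
  assumes st: "Int_stable Gen" and gp: "Gen \<subseteq> Pow (space M)" and gs: "Gen \<subseteq> sets M"
    and top: "space M \<in> Gen"
    and i1: "integrable M h1" and i2: "integrable M h2"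
    and eq: "\<And>g. g \<in> Gen \<Longrightarrow> (\<integral>x. indicator g x * h1 x \<partial>M) = (\<integral>x. indicator g x * h2 x \<partial>M)"
    and D: "D \<in> sigma_sets (space M) Gen"
  shows "(\<integral>x. indicator D x * h1 x \<partial>M) = (\<integral>x. indicator D x * h2 x \<partial>M)"
  using st gp D
proof (induct rule: sigma_sets_induct_disjoint)
  case (basic A) then show ?case by (rule eq)
next
  case empty then show ?case by simp
next
  case (compl A)
  have As: "A \<in> sets M" using compl(1) sets.sigma_sets_subset[OF gs] by auto
  have diff: "(\<integral>x. indicator (space M - A) x * h x \<partial>M) = (\<integral>x. h x \<partial>M) - (\<integral>x. indicator A x * h x \<partial>M)"
    if ih: "integrable M h" for h :: "'a \<Rightarrow> real"
  proof -
    have "(\<integral>x. indicator (space M - A) x * h x \<partial>M) = (\<integral>x. h x - indicator A x * h x \<partial>M)"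
      by (rule Bochner_Integration.integral_cong) (auto simp: indicator_def)
    also have "\<dots> = (\<integral>x. h x \<partial>M) - (\<integral>x. indicator A x * h x \<partial>M)"
      by (rule Bochner_Integration.integral_diff[OF ih]) (use integrable_mult_indicator[OF As ih] in simp)
    finally show ?thesis .
  qed
  have sp: "(\<integral>x. indicator (space M) x * h x \<partial>M) = (\<integral>x. h x \<partial>M)" for h :: "'a \<Rightarrow> real"
    by (rule Bochner_Integration.integral_cong) auto
  have "(\<integral>x. h1 x \<partial>M) = (\<integral>x. h2 x \<partial>M)" using eq[OF top] by (simp only: sp)
  then show ?case using diff[OF i1] diff[OF i2] compl(2) by simp
next
  case (union A)
  have As: "\<And>i. A i \<in> sets M" using union(2) sets.sigma_sets_subset[OF gs] by auto
  have dj: "\<And>i j. i \<noteq> j \<Longrightarrow> A i \<inter> A j = {}" using union(1) by (auto simp: disjoint_family_on_def)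
  have UA: "(\<Union>i. A i) \<in> sets M" using As by auto
  have ca: "(\<integral>x. indicator (\<Union>i. A i) x * h x \<partial>M) = (\<Sum>i. (\<integral>x. indicator (A i) x * h x \<partial>M))"
    if ih: "integrable M h" for h :: "'a \<Rightarrow> real"
  proof -
    have "set_integrable M (\<Union>i. A i) h" unfolding set_integrable_def
      using integrable_mult_indicator[OF UA ih] .
    from lebesgue_integral_countable_add[OF As dj this] show ?thesis
      by (simp add: set_lebesgue_integral_def)
  qed
  show ?case using ca[OF i1] ca[OF i2] union(3) by simp
qed

lemma integral_mult_cong_AE:
  fixes Z u v :: "'a \<Rightarrow> real"
  assumes "AE x in M. u x = v x" "Z \<in> borel_measurable M" "u \<in> borel_measurable M" "v \<in> borel_measurable M"
  shows "(\<integral>x. Z x * u x \<partial>M) = (\<integral>x. Z x * v x \<partial>M)"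
  by (rule integral_cong_AE) (use assms in \<open>auto elim!: AE_mp\<close>)

lemma ce_intg:
  fixes Z X :: "'a \<Rightarrow> real"
  assumes "sigma_finite_subalgebra M F" "Z \<in> borel_measurable F" "X \<in> borel_measurable M"
    "integrable M (\<lambda>x. Z x * X x)"
  shows "(\<integral>x. Z x * X x \<partial>M) = (\<integral>x. Z x * real_cond_exp M F X x \<partial>M)"
  using sigma_finite_subalgebra.real_cond_exp_intg(2)[OF assms(1) assms(4) assms(2) assms(3)] by simp

lemma ce_intg_bdd:
  fixes Z X :: "'a \<Rightarrow> real"
  assumes sf: "sigma_finite_subalgebra M F" and Z: "Z \<in> borel_measurable F" and X: "integrable M X"
    and b: "AE x in M. \<bar>Z x\<bar> \<le> c"
  shows "(\<integral>x. Z x * X x \<partial>M) = (\<integral>x. Z x * real_cond_exp M F X x \<partial>M)"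
proof (rule ce_intg[OF sf Z])
  show "X \<in> borel_measurable M" using X by auto
  have "Z \<in> borel_measurable M"
    using measurable_from_subalg[OF sigma_finite_subalgebra.subalg[OF sf] Z] .
  then show "integrable M (\<lambda>x. Z x * X x)" by (rule integrable_bdd_mult[OF X _ b])
qed

context smc
begin

lemma markov_ae:
  assumes "A \<in> sets S"
  shows "AE \<omega> in M. real_cond_exp M (G {..N}) (indicator (xi (N + 1) -` A \<inter> space M)) \<omega>
                 = real_cond_exp M (G {N}) (indicator (xi (N + 1) -` A \<inter> space M)) \<omega>"
  using markov assms unfolding markov_process_def by blast

lemma meas_G_M: "Z \<in> borel_measurable (G K) \<Longrightarrow> Z \<in> borel_measurable M"
  by (rule measurable_from_subalg[OF subalg_G])

lemma meas_G_G: "K \<subseteq> L \<Longrightarrow> Z \<in> borel_measurable (G K) \<Longrightarrow> Z \<in> borel_measurable (G L)"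
  by (rule measurable_from_subalg[OF subalg_G_G])

lemma ind_meas_G: "a \<in> sets (G K) \<Longrightarrow> (indicator a :: 'a \<Rightarrow> real) \<in> borel_measurable (G K)"
  by (rule borel_measurable_indicator)

lemma ind_bdd: "AE x in M. \<bar>indicator a x :: real\<bar> \<le> 1"
  by (auto simp: indicator_def)

lemma ceind_bdd: "a \<in> sets M \<Longrightarrow> AE x in M. \<bar>real_cond_exp M (G K) (indicator a) x\<bar> \<le> 1"
  by (rule ce_ind_bdd[OF P subalg_G])

lemma int_ind: assumes "a \<in> sets M" shows "integrable M (indicator a :: 'a \<Rightarrow> real)"
proof -
  interpret prob_space M by (rule P)
  show ?thesis using assms by (simp add: emeasure_eq_measure)
qed

lemma bdd_mult: assumes "AE x in M. \<bar>u x\<bar> \<le> (1::real)" "AE x in M. \<bar>v x\<bar> \<le> 1" shows "AE x in M. \<bar>u x * v x\<bar> \<le> 1"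
  using assms by eventually_elim (simp add: abs_mult mult_le_one)

end


context smc
begin

lemma prs_sets: "prs K1 K2 \<subseteq> sets M"
  unfolding prs_def using sets_G_sub by blast

lemma ce_int: "integrable M X \<Longrightarrow> integrable M (real_cond_exp M (G K) X)"
  by (rule sigma_finite_subalgebra.real_cond_exp_int(1)[OF sfs_G])

lemma M1:
  assumes "a \<in> sets (G {..n})"
  shows "AE x in M. real_cond_exp M (G {n..n + int k}) (indicator a) x = real_cond_exp M (G {n}) (indicator a) x"
  using assms
proof (induction k arbitrary: a)
  case 0
  then show ?case by simp
next
  case (Suc k a)
  define N where "N = n + int k + 1"
  have aM[measurable]: "a \<in> sets M" using Suc.prems sets_G_sub by auto
  define e where "e = real_cond_exp M (G {n}) (indicator a)"
  have Ueq: "{n..n + int (Suc k)} = {n..n + int k} \<union> {N}" by (auto simp: N_def)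
  interpret F: sigma_finite_subalgebra M "G {n..n + int (Suc k)}" by (rule sfs_G)
  have IH: "AE x in M. real_cond_exp M (G {n..n + int k}) (indicator a) x = e x"
    unfolding e_def by (rule Suc.IH[OF Suc.prems])
  have ia: "integrable M (indicator a :: 'a \<Rightarrow> real)" by (rule int_ind[OF aM])
  show ?case
  proof (rule F.real_cond_exp_charact)
    show "integrable M (indicator a :: 'a \<Rightarrow> real)" by (rule ia)
    show "integrable M (real_cond_exp M (G {n}) (indicator a))" by (rule ce_int[OF ia])
    show "real_cond_exp M (G {n}) (indicator a) \<in> borel_measurable (G {n..n + int (Suc k)})"
      by (rule meas_G_G[of "{n}"]) auto
    fix D assume "D \<in> sets (G {n..n + int (Suc k)})"
    then have D: "D \<in> sigma_sets (space M) (prs {n..n + int k} {N})"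
      using sets_G_Un[of "{n..n + int k}" "{N}"] by (simp only: Ueq)
    have "(\<integral>x. indicator D x * indicator a x \<partial>M) = (\<integral>x. indicator D x * e x \<partial>M)"
    proof (rule set_int_dynkin[OF prs_Int_stable prs_Pow prs_sets space_in_prs ia])
      show "integrable M e" unfolding e_def by (rule ce_int[OF ia])
      show "D \<in> sigma_sets (space M) (prs {n..n + int k} {N})" by (rule D)
      fix g assume "g \<in> prs {n..n + int k} {N}"
      then obtain r c where r: "r \<in> sets (G {n..n + int k})" and c: "c \<in> sets (G {N})" and g: "g = r \<inter> c"
        unfolding prs_def by auto
      obtain A where A: "A \<in> sets S" and cA: "c = xi (n + int k + 1) -` A \<inter> space M"
        using c unfolding sets_G_single N_def by auto
      have rM[measurable]: "r \<in> sets M" using r sets_G_sub by auto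
      have cM[measurable]: "c \<in> sets M" using c sets_G_sub by auto
      define FP where "FP = G {..n + int k}"
      define B where "B = G {n..n + int k}"
      define g1 where "g1 = real_cond_exp M (G {n + int k}) (indicator c)"
      define gP where "gP = real_cond_exp M FP (indicator c)"
      have mk: "AE x in M. gP x = g1 x"
        unfolding gP_def g1_def FP_def cA by (rule markov_ae[OF A])
      have aFP: "a \<in> sets FP" using Suc.prems G_mono[of "{..n}" "{..n + int k}"] by (auto simp: FP_def)
      have rFP: "r \<in> sets FP" using r G_mono[of "{n..n + int k}" "{..n + int k}"] by (auto simp: FP_def)
      have rB: "r \<in> sets B" using r by (simp add: B_def)
      have g1B: "g1 \<in> borel_measurable B" unfolding g1_def B_def
        by (rule meas_G_G[of "{n + int k}"]) auto
      have eFP: "e \<in> borel_measurable FP" unfolding e_def FP_def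
        by (rule meas_G_G[of "{n}"]) auto
      have [measurable]: "g1 \<in> borel_measurable M" "gP \<in> borel_measurable M" "e \<in> borel_measurable M"
        unfolding g1_def gP_def e_def by auto
      have ic: "integrable M (indicator c :: 'a \<Rightarrow> real)" by (rule int_ind[OF cM])
      have b1: "AE x in M. \<bar>indicator a x * indicator r x :: real\<bar> \<le> 1" by (rule bdd_mult[OF ind_bdd ind_bdd])
      have b2: "AE x in M. \<bar>indicator r x * g1 x\<bar> \<le> 1" unfolding g1_def by (rule bdd_mult[OF ind_bdd ceind_bdd[OF cM]])
      have b3: "AE x in M. \<bar>e x * indicator r x\<bar> \<le> 1" unfolding e_def by (rule bdd_mult[OF ceind_bdd[OF aM] ind_bdd])
      have "(\<integral>x. indicator g x * indicator a x \<partial>M) = (\<integral>x. (indicator a x * indicator r x) * (indicator c x :: real) \<partial>M)"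
        unfolding g indicator_inter_arith by (simp add: mult_ac)
      also have "\<dots> = (\<integral>x. (indicator a x * indicator r x) * gP x \<partial>M)"
        unfolding gP_def FP_def
        by (rule ce_intg_bdd[OF sfs_G _ ic b1]) (use aFP rFP in \<open>auto simp: FP_def\<close>)
      also have "\<dots> = (\<integral>x. (indicator a x * indicator r x) * g1 x \<partial>M)"
        by (rule integral_mult_cong_AE[OF mk]) auto
      also have "\<dots> = (\<integral>x. (indicator r x * g1 x) * indicator a x \<partial>M)"
        by (simp add: mult_ac)
      also have "\<dots> = (\<integral>x. (indicator r x * g1 x) * real_cond_exp M B (indicator a) x \<partial>M)"
        unfolding B_def
        by (rule ce_intg_bdd[OF sfs_G _ ia b2]) (use rB g1B in \<open>auto simp: B_def\<close>)
      also have "\<dots> = (\<integral>x. (indicator r x * g1 x) * e x \<partial>M)"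
        by (rule integral_mult_cong_AE[OF IH[folded B_def]]) (auto simp: B_def)
      also have "\<dots> = (\<integral>x. (e x * indicator r x) * g1 x \<partial>M)"
        by (simp add: mult_ac)
      also have "\<dots> = (\<integral>x. (e x * indicator r x) * gP x \<partial>M)"
        by (rule integral_mult_cong_AE[OF AE_symmetric[OF mk]]) auto
      also have "\<dots> = (\<integral>x. (e x * indicator r x) * indicator c x \<partial>M)"
        unfolding gP_def FP_def
        by (rule ce_intg_bdd[OF sfs_G _ ic b3, symmetric]) (use eFP rFP in \<open>auto simp: FP_def\<close>)
      also have "\<dots> = (\<integral>x. indicator g x * e x \<partial>M)"
        unfolding g indicator_inter_arith by (simp add: mult_ac)
      finally show "(\<integral>x. indicator g x * indicator a x \<partial>M) = (\<integral>x. indicator g x * e x \<partial>M)" .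
    qed
    then show "(\<integral>x\<in>D. indicator a x \<partial>M) = (\<integral>x\<in>D. real_cond_exp M (G {n}) (indicator a) x \<partial>M)"
      by (simp add: set_lebesgue_integral_def e_def)
  qed
qed

end


lemma int_ind_mult:
  fixes T :: "'a \<Rightarrow> real"
  assumes "integrable M T" "a \<in> sets M" "h \<in> sets M"
  shows "integrable M (\<lambda>x. (indicator h x * T x) * indicator a x)"
  by (rule Bochner_Integration.integrable_bound[OF assms(1)]) (use assms in \<open>auto simp: indicator_def\<close>)

lemma abs_ci:
  fixes T :: "'a \<Rightarrow> real"
  assumes P: "prob_space M" and sC: "subalgebra M C" and sH: "subalgebra M H" and sB: "subalgebra M Bg"
    and HC: "subalgebra H C" and BH: "subalgebra Bg H"
    and aM[measurable]: "a \<in> sets M"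
    and ci: "AE x in M. real_cond_exp M Bg (indicator a) x = real_cond_exp M C (indicator a) x"
    and T: "integrable M T" and TB: "T \<in> borel_measurable Bg" and h: "h \<in> sets H"
  shows "(\<integral>x. indicator (a \<inter> h) x * T x \<partial>M) = (\<integral>x. indicator (a \<inter> h) x * real_cond_exp M H T x \<partial>M)"
proof -
  define e where "e = real_cond_exp M C (indicator a)"
  define W where "W = real_cond_exp M H T"
  define eB where "eB = real_cond_exp M Bg (indicator a)"
  have sfH: "sigma_finite_subalgebra M H" by (rule sfs[OF P sH])
  have sfB: "sigma_finite_subalgebra M Bg" by (rule sfs[OF P sB])
  have hM[measurable]: "h \<in> sets M" using h sH by (auto simp: subalgebra_def)
  have hB: "h \<in> sets Bg" using h BH by (auto simp: subalgebra_def)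
  have eH: "e \<in> borel_measurable H" unfolding e_def by (rule measurable_from_subalg[OF HC]) simp
  have WB: "W \<in> borel_measurable Bg" unfolding W_def by (rule measurable_from_subalg[OF BH]) simp
  have [measurable]: "e \<in> borel_measurable M" "W \<in> borel_measurable M" "eB \<in> borel_measurable M"
    "T \<in> borel_measurable M"
    unfolding e_def W_def eB_def using T by auto
  have ia: "integrable M (indicator a :: 'a \<Rightarrow> real)"
  proof -
    interpret prob_space M by (rule P)
    show ?thesis using aM by (simp add: emeasure_eq_measure)
  qed
  have iW: "integrable M W" unfolding W_def by (rule sigma_finite_subalgebra.real_cond_exp_int(1)[OF sfH T])
  have be: "AE x in M. \<bar>e x * indicator h x\<bar> \<le> 1"
    using ce_ind_bdd[OF P sC aM] unfolding e_def by eventually_elim (auto simp: indicator_def)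
  have ci': "AE x in M. eB x = e x" using ci unfolding eB_def e_def .
  have "(\<integral>x. indicator (a \<inter> h) x * T x \<partial>M) = (\<integral>x. (indicator h x * T x) * indicator a x \<partial>M)"
    unfolding indicator_inter_arith by (simp add: mult_ac)
  also have "\<dots> = (\<integral>x. (indicator h x * T x) * eB x \<partial>M)"
    unfolding eB_def by (rule ce_intg[OF sfB _ _ int_ind_mult[OF T aM hM]]) (use hB TB in auto)
  also have "\<dots> = (\<integral>x. (indicator h x * T x) * e x \<partial>M)"
    by (rule integral_mult_cong_AE[OF ci']) auto
  also have "\<dots> = (\<integral>x. (e x * indicator h x) * T x \<partial>M)"
    by (simp add: mult_ac)
  also have "\<dots> = (\<integral>x. (e x * indicator h x) * W x \<partial>M)"
    unfolding W_def by (rule ce_intg_bdd[OF sfH _ T be]) (use eH h in auto)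
  also have "\<dots> = (\<integral>x. (indicator h x * W x) * e x \<partial>M)"
    by (simp add: mult_ac)
  also have "\<dots> = (\<integral>x. (indicator h x * W x) * eB x \<partial>M)"
    by (rule integral_mult_cong_AE[OF AE_symmetric[OF ci']]) auto
  also have "\<dots> = (\<integral>x. (indicator h x * W x) * indicator a x \<partial>M)"
    unfolding eB_def by (rule ce_intg[OF sfB _ _ int_ind_mult[OF iW aM hM], symmetric]) (use hB WB in auto)
  also have "\<dots> = (\<integral>x. indicator (a \<inter> h) x * W x \<partial>M)"
    unfolding indicator_inter_arith by (simp add: mult_ac)
  finally show ?thesis unfolding W_def .
qed

context smc
begin

lemma REV:
  assumes b: "b \<in> sets (G {n..n + int k})"
  shows "AE x in M. real_cond_exp M (G {..n}) (indicator b) x = real_cond_exp M (G {n}) (indicator b) x"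
proof -
  interpret F: sigma_finite_subalgebra M "G {..n}" by (rule sfs_G)
  have bM[measurable]: "b \<in> sets M" using b sets_G_sub by auto
  have ib: "integrable M (indicator b :: 'a \<Rightarrow> real)" by (rule int_ind[OF bM])
  show ?thesis
  proof (rule F.real_cond_exp_charact)
    show "integrable M (indicator b :: 'a \<Rightarrow> real)" by (rule ib)
    show "integrable M (real_cond_exp M (G {n}) (indicator b))" by (rule ce_int[OF ib])
    show "real_cond_exp M (G {n}) (indicator b) \<in> borel_measurable (G {..n})"
      by (rule meas_G_G[of "{n}"]) auto
    fix a assume a: "a \<in> sets (G {..n})"
    have aM[measurable]: "a \<in> sets M" using a sets_G_sub by auto
    have ia: "integrable M (indicator a :: 'a \<Rightarrow> real)" by (rule int_ind[OF aM])
    define eb where "eb = real_cond_exp M (G {n}) (indicator b)"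
    define ea where "ea = real_cond_exp M (G {n}) (indicator a)"
    define eaB where "eaB = real_cond_exp M (G {n..n + int k}) (indicator a)"
    have [measurable]: "eb \<in> borel_measurable M" "ea \<in> borel_measurable M" "eaB \<in> borel_measurable M"
      unfolding eb_def ea_def eaB_def by auto
    have m1: "AE x in M. eaB x = ea x" unfolding eaB_def ea_def by (rule M1[OF a])
    have "(\<integral>x. indicator a x * eb x \<partial>M) = (\<integral>x. eb x * indicator a x \<partial>M)" by (simp add: mult_ac)
    also have "\<dots> = (\<integral>x. eb x * ea x \<partial>M)"
      unfolding ea_def by (rule ce_intg_bdd[OF sfs_G _ ia]) (auto simp: eb_def intro: ceind_bdd[OF bM])
    also have "\<dots> = (\<integral>x. ea x * eb x \<partial>M)" by (simp add: mult_ac)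
    also have "\<dots> = (\<integral>x. ea x * indicator b x \<partial>M)"
      unfolding eb_def by (rule ce_intg_bdd[OF sfs_G _ ib, symmetric]) (auto simp: ea_def intro: ceind_bdd[OF aM])
    also have "\<dots> = (\<integral>x. indicator b x * ea x \<partial>M)" by (simp add: mult_ac)
    also have "\<dots> = (\<integral>x. indicator b x * eaB x \<partial>M)"
      by (rule integral_mult_cong_AE[OF AE_symmetric[OF m1]]) auto
    also have "\<dots> = (\<integral>x. indicator b x * indicator a x \<partial>M)"
      unfolding eaB_def by (rule ce_intg_bdd[OF sfs_G _ ia ind_bdd, symmetric]) (use b in auto)
    finally show "(\<integral>x\<in>a. indicator b x \<partial>M) = (\<integral>x\<in>a. real_cond_exp M (G {n}) (indicator b) x \<partial>M)"
      by (simp add: set_lebesgue_integral_def eb_def mult_ac)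
  qed
qed

lemma FL:
  fixes T :: "'a \<Rightarrow> real"
  assumes T: "integrable M T" and TB: "T \<in> borel_measurable (G {n..n + int k})"
    and nJ: "n \<in> J" and J: "J \<subseteq> {n..n + int k}" and n0: "0 \<le> n"
  shows "AE x in M. real_cond_exp M (G ({0} \<union> J)) T x = real_cond_exp M (G J) T x"
proof -
  interpret F: sigma_finite_subalgebra M "G ({0} \<union> J)" by (rule sfs_G)
  show ?thesis
  proof (rule F.real_cond_exp_charact)
    show "integrable M T" by (rule T)
    show "integrable M (real_cond_exp M (G J) T)" by (rule ce_int[OF T])
    show "real_cond_exp M (G J) T \<in> borel_measurable (G ({0} \<union> J))"
      by (rule meas_G_G[of J]) auto
    fix D assume "D \<in> sets (G ({0} \<union> J))"
    then have D: "D \<in> sigma_sets (space M) (prs {0} J)" by (simp only: sets_G_Un)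
    have "(\<integral>x. indicator D x * T x \<partial>M) = (\<integral>x. indicator D x * real_cond_exp M (G J) T x \<partial>M)"
    proof (rule set_int_dynkin[OF prs_Int_stable prs_Pow prs_sets space_in_prs T ce_int[OF T] _ D])
      fix g assume "g \<in> prs {0} J"
      then obtain a h where a: "a \<in> sets (G {0})" and h: "h \<in> sets (G J)" and g: "g = a \<inter> h"
        unfolding prs_def by auto
      have aP: "a \<in> sets (G {..n})" using a G_mono[of "{0}" "{..n}"] n0 by auto
      have aM: "a \<in> sets M" using a sets_G_sub by auto
      show "(\<integral>x. indicator g x * T x \<partial>M) = (\<integral>x. indicator g x * real_cond_exp M (G J) T x \<partial>M)"
        unfolding g
        by (rule abs_ci[OF P subalg_G subalg_G subalg_G subalg_G_G subalg_G_G aM M1[OF aP] T TB h])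
           (use nJ J in auto)
    qed
    then show "(\<integral>x\<in>D. T x \<partial>M) = (\<integral>x\<in>D. real_cond_exp M (G J) T x \<partial>M)"
      by (simp add: set_lebesgue_integral_def)
  qed
qed

lemma PL:
  fixes Y :: "'a \<Rightarrow> real"
  assumes Y: "integrable M Y" and YP: "Y \<in> borel_measurable (G {..n})"
    and nJ: "n \<in> J" and J: "J \<subseteq> {..n}" and nN: "n \<le> N"
  shows "AE x in M. real_cond_exp M (G (J \<union> {N})) Y x = real_cond_exp M (G J) Y x"
proof -
  interpret F: sigma_finite_subalgebra M "G (J \<union> {N})" by (rule sfs_G)
  show ?thesis
  proof (rule F.real_cond_exp_charact)
    show "integrable M Y" by (rule Y)
    show "integrable M (real_cond_exp M (G J) Y)" by (rule ce_int[OF Y])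
    show "real_cond_exp M (G J) Y \<in> borel_measurable (G (J \<union> {N}))"
      by (rule meas_G_G[of J]) auto
    fix D assume "D \<in> sets (G (J \<union> {N}))"
    then have D: "D \<in> sigma_sets (space M) (prs J {N})" by (simp only: sets_G_Un)
    have "(\<integral>x. indicator D x * Y x \<partial>M) = (\<integral>x. indicator D x * real_cond_exp M (G J) Y x \<partial>M)"
    proof (rule set_int_dynkin[OF prs_Int_stable prs_Pow prs_sets space_in_prs Y ce_int[OF Y] _ D])
      fix g assume "g \<in> prs J {N}"
      then obtain h b where h: "h \<in> sets (G J)" and b: "b \<in> sets (G {N})" and g: "g = h \<inter> b"
        unfolding prs_def by auto
      have bB: "b \<in> sets (G {n..n + int (nat (N - n))})" using b G_mono[of "{N}" "{n..n + int (nat (N - n))}"] nN by auto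
      have bM: "b \<in> sets M" using b sets_G_sub by auto
      have "(\<integral>x. indicator (b \<inter> h) x * Y x \<partial>M) = (\<integral>x. indicator (b \<inter> h) x * real_cond_exp M (G J) Y x \<partial>M)"
        by (rule abs_ci[OF P subalg_G subalg_G subalg_G subalg_G_G subalg_G_G bM REV[OF bB] Y YP h])
           (use nJ J in auto)
      then show "(\<integral>x. indicator g x * Y x \<partial>M) = (\<integral>x. indicator g x * real_cond_exp M (G J) Y x \<partial>M)"
        unfolding g by (simp add: Int_commute)
    qed
    then show "(\<integral>x\<in>D. Y x \<partial>M) = (\<integral>x\<in>D. real_cond_exp M (G J) Y x \<partial>M)"
      by (simp add: set_lebesgue_integral_def)
  qed
qed

end


lemma cr:
  fixes \<phi> :: "'b \<Rightarrow> real"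
  assumes P: "prob_space M" and U[measurable]: "U \<in> measurable M N" and sG: "subalgebra N Gs"
    and sF: "subalgebra M F"
    and setsF: "sets F = {U -` D \<inter> space M | D. D \<in> sets Gs}"
    and phi: "integrable (distr M N U) \<phi>"
  shows "AE x in M. real_cond_exp M F (\<lambda>x. \<phi> (U x)) x = real_cond_exp (distr M N U) Gs \<phi> (U x)"
proof -
  define Q where "Q = distr M N U"
  interpret Pm: prob_space M by (rule P)
  have PQ: "prob_space Q" unfolding Q_def by (rule Pm.prob_space_distr[OF U])
  have sQ: "subalgebra Q Gs" using sG by (simp add: subalgebra_def Q_def)
  interpret FQ: sigma_finite_subalgebra Q Gs by (rule sfs[OF PQ sQ])
  interpret FM: sigma_finite_subalgebra M F by (rule sfs[OF P sF])
  define \<psi> where "\<psi> = real_cond_exp Q Gs \<phi>"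
  have phim[measurable]: "\<phi> \<in> borel_measurable N" using phi borel_measurable_integrable by fastforce
  have psiG: "\<psi> \<in> borel_measurable Gs" unfolding \<psi>_def by simp
  have psim[measurable]: "\<psi> \<in> borel_measurable N"
    using measurable_from_subalg[OF sG psiG] .
  have ipsi: "integrable Q \<psi>" unfolding \<psi>_def by (rule FQ.real_cond_exp_int(1)) (use phi in \<open>simp add: Q_def\<close>)
  have UF: "U \<in> measurable F Gs"
  proof (rule measurableI)
    fix x assume "x \<in> space F"
    then have "x \<in> space M" using sF by (simp add: subalgebra_def)
    then show "U x \<in> space Gs" using sG measurable_space[OF U] by (simp add: subalgebra_def)
  next
    fix D assume "D \<in> sets Gs"
    then show "U -` D \<inter> space F \<in> sets F" using sF setsF by (auto simp: subalgebra_def)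
  qed
  show ?thesis unfolding \<psi>_def[symmetric] Q_def[symmetric]
  proof (rule FM.real_cond_exp_charact)
    show "integrable M (\<lambda>x. \<phi> (U x))" using phi by (simp add: integrable_distr_eq)
    show "integrable M (\<lambda>x. \<psi> (U x))" using ipsi by (simp add: Q_def integrable_distr_eq)
    show "(\<lambda>x. \<psi> (U x)) \<in> borel_measurable F"
      using measurable_comp[OF UF psiG] by (simp add: o_def)
    fix A assume "A \<in> sets F"
    then obtain D where D: "D \<in> sets Gs" and A: "A = U -` D \<inter> space M" using setsF by auto
    have DN[measurable]: "D \<in> sets N" using D sG by (auto simp: subalgebra_def)
    have eq: "(\<integral>x\<in>A. h (U x) \<partial>M) = (\<integral>y\<in>D. h y \<partial>Q)" if [measurable]: "h \<in> borel_measurable N" for h :: "'b \<Rightarrow> real"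
    proof -
      have "(\<integral>x\<in>A. h (U x) \<partial>M) = (\<integral>x. indicator D (U x) * h (U x) \<partial>M)"
        unfolding set_lebesgue_integral_def A by (rule Bochner_Integration.integral_cong) (auto simp: indicator_def)
      also have "\<dots> = (\<integral>y. indicator D y * h y \<partial>Q)"
        unfolding Q_def by (rule integral_distr[symmetric]) auto
      finally show ?thesis by (simp add: set_lebesgue_integral_def)
    qed
    have "(\<integral>x\<in>A. \<phi> (U x) \<partial>M) = (\<integral>y\<in>D. \<phi> y \<partial>Q)" by (rule eq) simp
    also have "\<dots> = (\<integral>y\<in>D. \<psi> y \<partial>Q)" unfolding \<psi>_def
      by (rule FQ.real_cond_exp_intA) (use phi D in \<open>auto simp: Q_def\<close>)
    also have "\<dots> = (\<integral>x\<in>A. \<psi> (U x) \<partial>M)" by (rule eq[symmetric]) simp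
    finally show "(\<integral>x\<in>A. \<phi> (U x) \<partial>M) = (\<integral>x\<in>A. \<psi> (U x) \<partial>M)" .
  qed
qed

lemma cr_norm:
  fixes \<phi> :: "'b \<Rightarrow> real"
  assumes P: "prob_space M" and U[measurable]: "U \<in> measurable M N" and sG: "subalgebra N Gs"
    and sF: "subalgebra M F"
    and setsF: "sets F = {U -` D \<inter> space M | D. D \<in> sets Gs}"
    and phi: "integrable (distr M N U) \<phi>"
  shows "L2norm M (real_cond_exp M F (\<lambda>x. \<phi> (U x))) = sqrt (\<integral>y. (real_cond_exp (distr M N U) Gs \<phi> y)\<^sup>2 \<partial>distr M N U)"
proof -
  have psim[measurable]: "real_cond_exp (distr M N U) Gs \<phi> \<in> borel_measurable N"
    using measurable_from_subalg[OF sG borel_measurable_cond_exp] .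
  have "L2norm M (real_cond_exp M F (\<lambda>x. \<phi> (U x))) = L2norm M (\<lambda>x. real_cond_exp (distr M N U) Gs \<phi> (U x))"
    by (rule L2norm_cong_AE[OF cr[OF assms]]) auto
  also have "\<dots> = sqrt (\<integral>y. (real_cond_exp (distr M N U) Gs \<phi> y)\<^sup>2 \<partial>distr M N U)"
    unfolding L2norm_def by (subst integral_distr) auto
  finally show ?thesis .
qed


context smc
begin

definition IU :: "nat \<Rightarrow> nat \<Rightarrow> 'a \<Rightarrow> int \<Rightarrow> 's" where
  "IU m s \<omega> = (\<lambda>i\<in>{0..int m}. xi (i + int s) \<omega>)"

definition NN :: "nat \<Rightarrow> (int \<Rightarrow> 's) measure" where
  "NN m = Pi\<^sub>M {0..int m} (\<lambda>_. S)"

definition gN where "gN m J = (\<Union>j\<in>J. {(\<lambda>x. x j) -` A \<inter> space (NN m) | A. A \<in> sets S})"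

definition GsJ where "GsJ m J = sigma (space (NN m)) (gN m J)"

lemma IU_meas[measurable]: "IU m s \<in> measurable M (NN m)"
  unfolding IU_def NN_def by measurable

lemma IU0: "IU m 0 = (\<lambda>\<omega>. \<lambda>i\<in>{0..int m}. xi i \<omega>)"
  unfolding IU_def by simp

lemma stat_IU: "distr M (NN m) (IU m s) = distr M (NN m) (IU m 0)"
proof -
  have "finite {0..int m}" by simp
  then have "distr M (NN m) (\<lambda>\<omega>. \<lambda>i\<in>{0..int m}. xi (i + int s) \<omega>) = distr M (NN m) (\<lambda>\<omega>. \<lambda>i\<in>{0..int m}. xi i \<omega>)"
    using spec[OF spec[OF stat[unfolded stationary_process_def], of "{0..int m}"], of "int s"]
    unfolding NN_def by blast
  then show ?thesis unfolding IU0 by (simp add: IU_def[abs_def])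
qed

lemma gN_Pow: "gN m J \<subseteq> Pow (space (NN m))" unfolding gN_def by auto

lemma gN_sets: "J \<subseteq> {0..int m} \<Longrightarrow> gN m J \<subseteq> sets (NN m)"
  unfolding gN_def NN_def by (auto intro!: measurable_sets[OF measurable_component_singleton])

lemma sub_GsJ: assumes "J \<subseteq> {0..int m}" shows "subalgebra (NN m) (GsJ m J)"
proof -
  have "sigma_sets (space (NN m)) (gN m J) \<subseteq> sets (NN m)"
    by (rule sets.sigma_sets_subset[OF gN_sets[OF assms]])
  moreover have "sets (GsJ m J) = sigma_sets (space (NN m)) (gN m J)"
    unfolding GsJ_def by (rule sets_measure_of[OF gN_Pow])
  moreover have "space (GsJ m J) = space (NN m)"
    unfolding GsJ_def by (rule space_measure_of_conv)
  ultimately show ?thesis unfolding subalgebra_def by simp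
qed

lemma vim_key:
  assumes "j \<in> {0..int m}"
  shows "IU m s -` ((\<lambda>x. x j) -` A \<inter> space (NN m)) \<inter> space M = xi (j + int s) -` A \<inter> space M"
proof -
  have sp: "IU m s \<omega> \<in> space (NN m)" if "\<omega> \<in> space M" for \<omega>
    by (rule measurable_space[OF IU_meas that])
  have ev: "IU m s \<omega> j = xi (j + int s) \<omega>" for \<omega> using assms by (simp add: IU_def)
  show ?thesis
  proof (rule set_eqI)
    fix \<omega>
    show "\<omega> \<in> IU m s -` ((\<lambda>x. x j) -` A \<inter> space (NN m)) \<inter> space M \<longleftrightarrow> \<omega> \<in> xi (j + int s) -` A \<inter> space M"
      using sp[of \<omega>] by (simp only: vimage_eq Int_iff ev) blast
  qed
qed

lemma gens_shift:
  assumes J: "J \<subseteq> {0..int m}"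
  shows "{IU m s -` D \<inter> space M | D. D \<in> gN m J} = gens ((\<lambda>j. j + int s) ` J)"
proof
  show "{IU m s -` D \<inter> space M | D. D \<in> gN m J} \<subseteq> gens ((\<lambda>j. j + int s) ` J)"
  proof clarify
    fix D assume "D \<in> gN m J"
    then obtain j A where j: "j \<in> J" and A: "A \<in> sets S" and D: "D = (\<lambda>x. x j) -` A \<inter> space (NN m)"
      unfolding gN_def by auto
    have "IU m s -` D \<inter> space M = xi (j + int s) -` A \<inter> space M" unfolding D
      by (rule vim_key) (use j J in auto)
    then show "IU m s -` D \<inter> space M \<in> gens ((\<lambda>j. j + int s) ` J)"
      unfolding gens_def using j A by blast
  qed
next
  show "gens ((\<lambda>j. j + int s) ` J) \<subseteq> {IU m s -` D \<inter> space M | D. D \<in> gN m J}"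
  proof
    fix x assume "x \<in> gens ((\<lambda>j. j + int s) ` J)"
    then obtain j A where j: "j \<in> J" and A: "A \<in> sets S" and x: "x = xi (j + int s) -` A \<inter> space M"
      unfolding gens_def by auto
    have "x = IU m s -` ((\<lambda>x. x j) -` A \<inter> space (NN m)) \<inter> space M" unfolding x
      by (rule vim_key[symmetric]) (use j J in auto)
    moreover have "(\<lambda>x. x j) -` A \<inter> space (NN m) \<in> gN m J" unfolding gN_def using j A by blast
    ultimately show "x \<in> {IU m s -` D \<inter> space M | D. D \<in> gN m J}" by blast
  qed
qed

lemma sets_shift:
  assumes J: "J \<subseteq> {0..int m}"
  shows "sets (G ((\<lambda>j. j + int s) ` J)) = {IU m s -` D \<inter> space M | D. D \<in> sets (GsJ m J)}"
proof -
  have "{IU m s -` D \<inter> space M | D. D \<in> sigma_sets (space (NN m)) (gN m J)}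
      = sigma_sets (space M) {IU m s -` D \<inter> space M | D. D \<in> gN m J}"
    by (rule sigma_sets_vimage_commute) (use measurable_space[OF IU_meas] in auto)
  moreover have "sets (GsJ m J) = sigma_sets (space (NN m)) (gN m J)"
    unfolding GsJ_def by (rule sets_measure_of[OF gN_Pow])
  moreover have "sets (G ((\<lambda>j. j + int s) ` J)) = sigma_sets (space M) {IU m s -` D \<inter> space M | D. D \<in> gN m J}"
    unfolding sets_G gens_shift[OF J] ..
  ultimately show ?thesis by (simp only:)
qed

lemma ST:
  fixes \<phi> :: "(int \<Rightarrow> 's) \<Rightarrow> real"
  assumes J: "J \<subseteq> {0..int m}" and phi: "integrable (distr M (NN m) (IU m 0)) \<phi>"
  shows "L2norm M (real_cond_exp M (G ((\<lambda>j. j + int s) ` J)) (\<lambda>\<omega>. \<phi> (IU m s \<omega>)))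
       = L2norm M (real_cond_exp M (G J) (\<lambda>\<omega>. \<phi> (IU m 0 \<omega>)))"
proof -
  have phis: "integrable (distr M (NN m) (IU m s)) \<phi>" for s using phi by (simp only: stat_IU[of m s])
  have "L2norm M (real_cond_exp M (G ((\<lambda>j. j + int s) ` J)) (\<lambda>\<omega>. \<phi> (IU m s \<omega>)))
     = sqrt (\<integral>y. (real_cond_exp (distr M (NN m) (IU m s)) (GsJ m J) \<phi> y)\<^sup>2 \<partial>distr M (NN m) (IU m s))"
    for s
    by (rule cr_norm[OF P IU_meas sub_GsJ[OF J] subalg_G sets_shift[OF J] phis])
  from this[of s] this[of 0] show ?thesis by (simp only: stat_IU[of m s] image_ident add_0_right of_nat_0)
qed

end


lemma sq_int_add:
  fixes X Y :: "'a \<Rightarrow> real"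
  assumes [measurable]: "X \<in> borel_measurable M" "Y \<in> borel_measurable M"
    and iX: "integrable M (\<lambda>x. (X x)\<^sup>2)" and iY: "integrable M (\<lambda>x. (Y x)\<^sup>2)"
  shows "integrable M (\<lambda>x. (X x + Y x)\<^sup>2)"
proof -
  have pw: "(X x + Y x)\<^sup>2 \<le> 2 * (X x)\<^sup>2 + 2 * (Y x)\<^sup>2" for x
  proof -
    have "0 \<le> (X x - Y x)\<^sup>2" by simp
    then show ?thesis by (simp add: power2_eq_square algebra_simps)
  qed
  have i2: "integrable M (\<lambda>x. 2 * (X x)\<^sup>2 + 2 * (Y x)\<^sup>2)" using iX iY by auto
  show ?thesis
    by (rule Bochner_Integration.integrable_bound[OF i2]) (auto intro!: AE_I2 order_trans[OF pw abs_ge_self] simp: pw)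
qed

locale smc_f = smc M S xi for M :: "'a measure" and S :: "'s measure" and xi +
  fixes f :: "'s \<Rightarrow> real"
  assumes fL2: "f \<in> L2_0 (distr M S (xi 0))"
begin

lemma f_meas[measurable]: "f \<in> borel_measurable S"
  using fL2 by (simp add: L2_0_def)

lemma f_int: "integrable M (\<lambda>\<omega>. f (xi i \<omega>))"
proof -
  have "integrable (distr M S (xi i)) f" using fL2 by (simp add: L2_0_def distr_xi[of i])
  then show ?thesis by (simp add: integrable_distr_eq)
qed

lemma f_sq: "integrable M (\<lambda>\<omega>. (f (xi i \<omega>))\<^sup>2)"
proof -
  have "integrable (distr M S (xi i)) (\<lambda>x. (f x)\<^sup>2)" using fL2 by (simp add: L2_0_def distr_xi[of i])
  then show ?thesis by (simp add: integrable_distr_eq)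
qed

lemma fsum_props:
  fixes I :: "nat set" and g :: "nat \<Rightarrow> int"
  assumes "finite I"
  shows "integrable M (\<lambda>\<omega>. \<Sum>i\<in>I. f (xi (g i) \<omega>))" "integrable M (\<lambda>\<omega>. (\<Sum>i\<in>I. f (xi (g i) \<omega>))\<^sup>2)"
proof -
  show "integrable M (\<lambda>\<omega>. \<Sum>i\<in>I. f (xi (g i) \<omega>))"
    by (rule Bochner_Integration.integrable_sum) (rule f_int)
  show "integrable M (\<lambda>\<omega>. (\<Sum>i\<in>I. f (xi (g i) \<omega>))\<^sup>2)"
    using assms
  proof (induction I rule: finite_induct)
    case empty then show ?case by simp
  next
    case (insert i I)
    have "integrable M (\<lambda>\<omega>. (f (xi (g i) \<omega>) + (\<Sum>i\<in>I. f (xi (g i) \<omega>)))\<^sup>2)"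
      by (rule sq_int_add[OF _ _ f_sq insert.IH]) auto
    then show ?case using insert.hyps by simp
  qed
qed

lemma fsum_meas:
  fixes I :: "nat set" and g :: "nat \<Rightarrow> int"
  assumes "g ` I \<subseteq> K"
  shows "(\<lambda>\<omega>. \<Sum>i\<in>I. f (xi (g i) \<omega>)) \<in> borel_measurable (G K)"
proof (rule borel_measurable_sum)
  fix i assume "i \<in> I"
  then have "g i \<in> K" using assms by auto
  then show "(\<lambda>\<omega>. f (xi (g i) \<omega>)) \<in> borel_measurable (G K)"
    using measurable_compose[OF xi_meas_G f_meas] by blast
qed

abbreviation E where "E K X \<equiv> real_cond_exp M (G K) X"

lemma split_norm:
  fixes X Y :: "'a \<Rightarrow> real"
  assumes [measurable]: "X \<in> borel_measurable M" "Y \<in> borel_measurable M"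
    and iX: "integrable M (\<lambda>x. (X x)\<^sup>2)" and iY: "integrable M (\<lambda>x. (Y x)\<^sup>2)"
  shows "L2norm M (E K (\<lambda>x. X x + Y x)) \<le> L2norm M (E K X) + L2norm M (E K Y)"
proof -
  interpret prob_space M by (rule P)
  interpret FK: sigma_finite_subalgebra M "G K" by (rule sfs_G)
  have i1: "integrable M X" "integrable M Y"
    using iX iY by (auto intro: square_integrable_imp_integrable)
  have "L2norm M (E K (\<lambda>x. X x + Y x)) = L2norm M (\<lambda>x. E K X x + E K Y x)"
    by (rule L2norm_cong_AE[OF FK.real_cond_exp_add[OF i1]]) auto
  also have "\<dots> \<le> L2norm M (E K X) + L2norm M (E K Y)"
    by (rule L2norm_triangle) (auto intro: ce_sq[OF P subalg_G] iX iY)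
  finally show ?thesis .
qed

lemma reduce:
  fixes X :: "'a \<Rightarrow> real"
  assumes [measurable]: "X \<in> borel_measurable M" and iX: "integrable M (\<lambda>x. (X x)\<^sup>2)"
    and KL: "K \<subseteq> L" and ae: "AE x in M. E L X x = E K' X x"
  shows "L2norm M (E K X) \<le> L2norm M (E K' X)"
proof -
  interpret prob_space M by (rule P)
  interpret FK: sigma_finite_subalgebra M "G K" by (rule sfs_G)
  have i1: "integrable M X" using iX by (auto intro: square_integrable_imp_integrable)
  have n1: "AE x in M. E K (E L X) x = E K X x"
    by (rule FK.real_cond_exp_nested_subalg[OF subalg_G subalg_G_G[OF KL] i1])
  have n2: "AE x in M. E K (E L X) x = E K (E K' X) x"
    by (rule FK.real_cond_exp_cong[OF ae]) auto
  have "L2norm M (E K X) = L2norm M (E K (E K' X))"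
    by (rule L2norm_cong_AE) (use n1 n2 in \<open>auto elim!: AE_mp\<close>)
  also have "\<dots> \<le> L2norm M (E K' X)"
    by (rule L2norm_ce_le[OF P subalg_G]) (auto intro: ce_sq[OF P subalg_G] iX)
  finally show ?thesis .
qed

end


context smc_f
begin

definition SS :: "nat \<Rightarrow> 'a \<Rightarrow> real" where "SS n = (\<lambda>\<omega>. \<Sum>i\<in>{1..n}. f (xi (int i) \<omega>))"
definition TT :: "nat \<Rightarrow> nat \<Rightarrow> 'a \<Rightarrow> real" where "TT n m = (\<lambda>\<omega>. \<Sum>i\<in>{1..m}. f (xi (int i + int n) \<omega>))"
definition phi :: "nat \<Rightarrow> (int \<Rightarrow> 's) \<Rightarrow> real" where "phi m = (\<lambda>x. \<Sum>i\<in>{1..m}. f (x (int i)))"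

lemma SS_split: "SS (n + m) = (\<lambda>\<omega>. SS n \<omega> + TT n m \<omega>)"
proof
  fix \<omega>
  define g where "g = (\<lambda>i::nat. f (xi (int i) \<omega>))"
  have "SS (n + m) \<omega> = sum g {1..n + m}" by (simp add: SS_def g_def)
  also have "\<dots> = sum g {1..n} + sum g {n + 1..n + m}" by (rule sum.ub_add_nat) simp
  also have "sum g {n + 1..n + m} = sum g {1 + n..m + n}" by (simp add: add.commute)
  also have "\<dots> = sum (\<lambda>i. g (i + n)) {1..m}" by (rule sum.shift_bounds_cl_nat_ivl)
  finally show "SS (n + m) \<omega> = SS n \<omega> + TT n m \<omega>" by (simp add: SS_def TT_def g_def)
qed

lemma TT_phi: "TT n m = (\<lambda>\<omega>. phi m (IU m n \<omega>))"
  unfolding TT_def phi_def IU_def by (auto intro!: sum.cong)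

lemma SS_phi: "SS m = (\<lambda>\<omega>. phi m (IU m 0 \<omega>))"
  unfolding SS_def phi_def IU_def by (auto intro!: sum.cong)

lemma phi_meas: "phi m \<in> borel_measurable (NN m)"
  unfolding phi_def NN_def
proof (rule borel_measurable_sum)
  fix i assume "i \<in> {1..m}"
  then have "int i \<in> {0..int m}" by auto
  then show "(\<lambda>x. f (x (int i))) \<in> borel_measurable (Pi\<^sub>M {0..int m} (\<lambda>_. S))"
    by measurable
qed

lemma SS_props: "integrable M (SS n)" "integrable M (\<lambda>x. (SS n x)\<^sup>2)" "SS n \<in> borel_measurable M"
  "SS n \<in> borel_measurable (G {..int n})"
proof -
  show "integrable M (SS n)" "integrable M (\<lambda>x. (SS n x)\<^sup>2)"
    unfolding SS_def using fsum_props[of "{1..n}" int] by auto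
  then show "SS n \<in> borel_measurable M" by auto
  show "SS n \<in> borel_measurable (G {..int n})" unfolding SS_def by (rule fsum_meas) auto
qed

lemma TT_props: "integrable M (TT n m)" "integrable M (\<lambda>x. (TT n m x)\<^sup>2)" "TT n m \<in> borel_measurable M"
  "TT n m \<in> borel_measurable (G {int n..int n + int m})"
proof -
  show "integrable M (TT n m)" "integrable M (\<lambda>x. (TT n m x)\<^sup>2)"
    unfolding TT_def using fsum_props[of "{1..m}" "\<lambda>i. int i + int n"] by auto
  then show "TT n m \<in> borel_measurable M" by auto
  show "TT n m \<in> borel_measurable (G {int n..int n + int m})" unfolding TT_def by (rule fsum_meas) auto
qed

lemma phi_int: "integrable (distr M (NN m) (IU m 0)) (phi m)"
  using SS_props(1)[of m] unfolding SS_phi by (simp add: integrable_distr_eq[OF IU_meas phi_meas])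

lemma STT:
  assumes "J \<subseteq> {0..int m}"
  shows "L2norm M (E ((\<lambda>j. j + int n) ` J) (TT n m)) = L2norm M (E J (SS m))"
  unfolding TT_phi SS_phi by (rule ST[OF assms phi_int])

lemma part1: "L2norm M (E {0} (SS (n + m))) \<le> L2norm M (E {0} (SS n)) + L2norm M (E {0} (SS m))"
proof -
  have "L2norm M (E {0} (SS (n + m))) \<le> L2norm M (E {0} (SS n)) + L2norm M (E {0} (TT n m))"
    unfolding SS_split by (rule split_norm) (auto simp: SS_props TT_props)
  also have "L2norm M (E {0} (TT n m)) \<le> L2norm M (E {int n} (TT n m))"
  proof -
    have ae: "AE x in M. E ({0} \<union> {int n}) (TT n m) x = E {int n} (TT n m) x"
      by (rule FL[OF TT_props(1) TT_props(4)]) auto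
    show ?thesis by (rule reduce[OF TT_props(3) TT_props(2) _ ae]) auto
  qed
  also have "\<dots> = L2norm M (E {0} (SS m))"
    using STT[of "{0}" m n] by simp
  finally show ?thesis by simp
qed

lemma part2: "L2norm M (E {int (n + m)} (SS (n + m))) \<le> L2norm M (E {int n} (SS n)) + L2norm M (E {int m} (SS m))"
proof -
  have "L2norm M (E {int (n + m)} (SS (n + m))) \<le> L2norm M (E {int (n + m)} (SS n)) + L2norm M (E {int (n + m)} (TT n m))"
    unfolding SS_split by (rule split_norm) (auto simp: SS_props TT_props)
  also have "L2norm M (E {int (n + m)} (SS n)) \<le> L2norm M (E {int n} (SS n))"
  proof -
    have ae: "AE x in M. E ({int n} \<union> {int (n + m)}) (SS n) x = E {int n} (SS n) x"
      by (rule PL[OF SS_props(1) SS_props(4)]) auto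
    show ?thesis by (rule reduce[OF SS_props(3) SS_props(2) _ ae]) auto
  qed
  also have "L2norm M (E {int (n + m)} (TT n m)) = L2norm M (E {int m} (SS m))"
  proof -
    have "(\<lambda>j. j + int n) ` {int m} = {int (n + m)}" by simp
    then show ?thesis using STT[of "{int m}" m n] by (simp add: add.commute)
  qed
  finally show ?thesis by simp
qed

lemma part3: "L2norm M (E {0, int (n + m)} (SS (n + m))) \<le> L2norm M (E {0, int n} (SS n)) + L2norm M (E {0, int m} (SS m))"
proof -
  have "L2norm M (E {0, int (n + m)} (SS (n + m))) \<le> L2norm M (E {0, int (n + m)} (SS n)) + L2norm M (E {0, int (n + m)} (TT n m))"
    unfolding SS_split by (rule split_norm) (auto simp: SS_props TT_props)
  also have "L2norm M (E {0, int (n + m)} (SS n)) \<le> L2norm M (E {0, int n} (SS n))"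
  proof -
    have ae: "AE x in M. E ({0, int n} \<union> {int (n + m)}) (SS n) x = E {0, int n} (SS n) x"
      by (rule PL[OF SS_props(1) SS_props(4)]) auto
    show ?thesis by (rule reduce[OF SS_props(3) SS_props(2) _ ae]) auto
  qed
  also have "L2norm M (E {0, int (n + m)} (TT n m)) \<le> L2norm M (E {int n, int (n + m)} (TT n m))"
  proof -
    have ae: "AE x in M. E ({0} \<union> {int n, int (n + m)}) (TT n m) x = E {int n, int (n + m)} (TT n m) x"
      by (rule FL[OF TT_props(1) TT_props(4)]) auto
    show ?thesis by (rule reduce[OF TT_props(3) TT_props(2) _ ae]) auto
  qed
  also have "L2norm M (E {int n, int (n + m)} (TT n m)) = L2norm M (E {0, int m} (SS m))"
  proof -
    have "(\<lambda>j. j + int n) ` {0, int m} = {int n, int (n + m)}" by auto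
    then show ?thesis using STT[of "{0, int m}" m n] by simp
  qed
  finally show ?thesis by simp
qed

end


theorem lemma2:
  fixes M :: "'a measure" and S :: "'s measure" and xi :: "int \<Rightarrow> 'a \<Rightarrow> 's" and f :: "'s \<Rightarrow> real"
  assumes "stationary_markov_chain M S xi"
    and "f \<in> L2_0 (distr M S (xi 0))"
  defines "Sn \<equiv> (\<lambda>(n::nat) \<omega>. \<Sum>i\<in>{1..n}. f (xi (int i) \<omega>))"
  shows "(\<forall>n m. L2norm M (real_cond_exp M (gen_sigma M S xi {0}) (Sn (n + m)))
              \<le> L2norm M (real_cond_exp M (gen_sigma M S xi {0}) (Sn n))
               + L2norm M (real_cond_exp M (gen_sigma M S xi {0}) (Sn m))) \<and>
         (\<forall>n m. L2norm M (real_cond_exp M (gen_sigma M S xi {int (n + m)}) (Sn (n + m)))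
              \<le> L2norm M (real_cond_exp M (gen_sigma M S xi {int n}) (Sn n))
               + L2norm M (real_cond_exp M (gen_sigma M S xi {int m}) (Sn m))) \<and>
         (\<forall>n m. L2norm M (real_cond_exp M (gen_sigma M S xi {0, int (n + m)}) (Sn (n + m)))
              \<le> L2norm M (real_cond_exp M (gen_sigma M S xi {0, int n}) (Sn n))
               + L2norm M (real_cond_exp M (gen_sigma M S xi {0, int m}) (Sn m)))"
proof -
  interpret smc_f M S xi f
    by unfold_locales (use assms in auto)
  have SnSS: "Sn = SS" by (intro ext) (simp add: Sn_def SS_def)
  show ?thesis unfolding SnSS using part1 part2 part3 by blast
qed

end
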